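(* Let $m$ be an integer with $3\le m\le 6$. Then for every integer $n\ge m-1$, $$F_{n+2,2}\equiv F_{n,2}\pmod{2^m},$$ i.e. from the term of index $m-1$ onward the sequence $(F_{n,2}\bmod 2^m)_{n\ge0}$ is periodic with period $2$.
   Context: For positive integers $r\le m\le n$, $S_r(n,m)$ denotes the $r$-Stirling number of the second kind: the number of partitions of $\{1,\dots,n\}$ into $m$ non-empty blocks such that $1,\dots,r$ lie in pairwise distinct blocks. For a positive integer $r$ and integer $n\ge 0$, the $r$-Fubini number is $F_{n,r}=\sum_{k=0}^{n}(k+r)!\,S_r(n+r,k+r)$. *)

theory Defs
  imports Main "HOL-Library.Disjoint_Sets"
begin

definition r_stirling :: "nat \<Rightarrow> nat \<Rightarrow> nat \<Rightarrow> nat" where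
  "r_stirling r n m = card {P. partition_on {1..n} P \<and> card P = m \<and>
      (\<forall>i\<in>{1..r}. \<forall>j\<in>{1..r}. \<forall>B\<in>P. i \<in> B \<and> j \<in> B \<longrightarrow> i = j)}"

definition r_fubini :: "nat \<Rightarrow> nat \<Rightarrow> nat" where
  "r_fubini n r = (\<Sum>k=0..n. fact (k + r) * r_stirling r (n + r) (k + r))"

end

theory Submission
  imports Defs
begin

definition sep :: "'a set \<Rightarrow> 'a set set \<Rightarrow> bool" where
  "sep R P \<longleftrightarrow> (\<forall>i\<in>R. \<forall>j\<in>R. \<forall>B\<in>P. i \<in> B \<and> j \<in> B \<longrightarrow> i = j)"

definition QQ :: "'a set \<Rightarrow> 'a set \<Rightarrow> nat \<Rightarrow> 'a set set set" where
  "QQ R A k = {P. partition_on A P \<and> card P = k \<and> sep R P}"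

definition ins :: "'a \<Rightarrow> 'a set set \<Rightarrow> 'a set \<Rightarrow> 'a set set" where
  "ins a P B = (\<lambda>X. if X = B then insert a X else X) ` P"

lemma part_facts:
  assumes "partition_on A P" "X \<in> P"
  shows "X \<subseteq> A" "X \<noteq> {}"
  using assms by (auto simp: partition_on_def)

lemma part_disj:
  assumes "partition_on A P" "X \<in> P" "Y \<in> P" "x \<in> X" "x \<in> Y"
  shows "X = Y"
  using assms unfolding partition_on_def disjoint_def by blast

lemma S1:
  assumes fin: "finite A" and aA: "a \<notin> A" and aR: "a \<notin> R"
  shows "{P \<in> QQ R (insert a A) (Suc k). {a} \<in> P} = insert {a} ` QQ R A k"
proof (intro equalityI subsetI)
  fix P' assume "P' \<in> {P \<in> QQ R (insert a A) (Suc k). {a} \<in> P}"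
  hence p: "partition_on (insert a A) P'" "card P' = Suc k" "sep R P'" "{a} \<in> P'"
    by (auto simp: QQ_def)
  define P where "P = P' - {{a}}"
  have PP: "P' = insert {a} P" "{a} \<notin> P" using p(4) by (auto simp: P_def)
  have fP': "finite P'" using p(1) fin finite_elements by blast
  have "disjnt {a} (\<Union>P)"
  proof -
    have "\<And>X. X \<in> P \<Longrightarrow> a \<notin> X"
      using part_disj[OF p(1)] p(4) by (auto simp: P_def)
    thus ?thesis by (auto simp: disjnt_def)
  qed
  hence "partition_on (insert a A - {a}) P" using p(1) PP(1) partition_on_insert by blast
  hence "partition_on A P" using aA by simp
  moreover have "card P = k" using p(2) PP fP' by (simp add: card_insert_if)
  moreover have "sep R P" using p(3) by (auto simp: sep_def P_def)
  ultimately show "P' \<in> insert {a} ` QQ R A k" using PP(1) by (auto simp: QQ_def)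
next
  fix P' assume "P' \<in> insert {a} ` QQ R A k"
  then obtain P where P: "P' = insert {a} P" "partition_on A P" "card P = k" "sep R P"
    by (auto simp: QQ_def)
  have fP: "finite P" using P(2) fin finite_elements by blast
  have aP: "{a} \<notin> P" using part_facts(1)[OF P(2)] aA by blast
  have "disjnt {a} (\<Union>P)" using P(2) aA by (auto simp: partition_on_def disjnt_def)
  hence "partition_on (insert a A) P'"
  proof -
    have "partition_on (insert a A - {a}) P" using P(2) aA by simp
    thus ?thesis unfolding P(1) using partition_on_insert[OF \<open>disjnt {a} (\<Union>P)\<close>] by simp
  qed
  moreover have "card P' = Suc k" using P fP aP by simp
  moreover have "sep R P'" using P(4) aR by (auto simp: sep_def P(1))
  ultimately show "P' \<in> {P \<in> QQ R (insert a A) (Suc k). {a} \<in> P}"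
    using P(1) by (auto simp: QQ_def)
qed

lemma S1card:
  assumes fin: "finite A" and aA: "a \<notin> A" and aR: "a \<notin> R"
  shows "card {P \<in> QQ R (insert a A) (Suc k). {a} \<in> P} = card (QQ R A k)"
proof -
  have "inj_on (insert {a}) (QQ R A k)"
  proof (rule inj_onI)
    fix P Q assume "P \<in> QQ R A k" "Q \<in> QQ R A k" "insert {a} P = insert {a} Q"
    moreover have "{a} \<notin> P" "{a} \<notin> Q"
      using \<open>P \<in> QQ R A k\<close> \<open>Q \<in> QQ R A k\<close> aA
      by (auto simp: QQ_def dest!: part_facts(1))
    ultimately show "P = Q" by (metis insert_ident)
  qed
  thus ?thesis using S1[OF assms] card_image by metis
qed

lemma ins_part:
  assumes fin: "finite A" and aA: "a \<notin> A" and aR: "a \<notin> R"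
    and P: "P \<in> QQ R A k" and B: "B \<in> P"
  shows "ins a P B \<in> QQ R (insert a A) k" "{a} \<notin> ins a P B"
    "inj_on (\<lambda>X. if X = B then insert a X else X) P"
proof -
  have p: "partition_on A P" "card P = k" "sep R P" using P by (auto simp: QQ_def)
  have sub: "\<And>X. X \<in> P \<Longrightarrow> X \<subseteq> A" and ne: "\<And>X. X \<in> P \<Longrightarrow> X \<noteq> {}"
    using part_facts[OF p(1)] by auto
  have dj: "\<And>X Y x. X \<in> P \<Longrightarrow> Y \<in> P \<Longrightarrow> x \<in> X \<Longrightarrow> x \<in> Y \<Longrightarrow> X = Y"
    using part_disj[OF p(1)] by blast
  have aX: "\<And>X. X \<in> P \<Longrightarrow> a \<notin> X" using sub aA by blast
  show inj: "inj_on (\<lambda>X. if X = B then insert a X else X) P"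
  proof (rule inj_onI)
    fix X Y assume XY: "X \<in> P" "Y \<in> P"
      "(if X = B then insert a X else X) = (if Y = B then insert a Y else Y)"
    show "X = Y"
    proof (cases "X = B"; cases "Y = B")
      assume "X = B" "Y \<noteq> B" thus ?thesis using XY aX by auto
    next
      assume "X \<noteq> B" "Y = B" thus ?thesis using XY aX by auto
    qed (use XY in auto)
  qed
  have un: "\<Union>(ins a P B) = insert a A"
    using p(1) B unfolding ins_def partition_on_def by auto
  have "partition_on (insert a A) (ins a P B)"
  proof (rule partition_onI[OF un])
    fix X' Y' assume "X' \<in> ins a P B" "Y' \<in> ins a P B" "X' \<noteq> Y'"
    obtain X where "X \<in> P" "X' = (if X = B then insert a X else X)"
      using \<open>X' \<in> ins a P B\<close> unfolding ins_def by blast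
    moreover obtain Y where "Y \<in> P" "Y' = (if Y = B then insert a Y else Y)"
      using \<open>Y' \<in> ins a P B\<close> unfolding ins_def by blast
    ultimately have XY: "X \<in> P" "Y \<in> P" "X' = (if X = B then insert a X else X)"
      "Y' = (if Y = B then insert a Y else Y)" by auto
    show "disjnt X' Y'"
      unfolding disjnt_def
    proof (rule ccontr)
      assume "X' \<inter> Y' \<noteq> {}"
      then obtain x where x: "x \<in> X'" "x \<in> Y'" by blast
      show False
      proof (cases "x = a")
        case True
        hence "X = B" "Y = B" using x XY aX by (auto split: if_splits)
        thus False using XY \<open>X' \<noteq> Y'\<close> by simp
      next
        case False
        hence "x \<in> X" "x \<in> Y" using x XY by (auto split: if_splits)
        hence "X = Y" using dj XY by blast
        thus False using XY \<open>X' \<noteq> Y'\<close> by metis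
      qed
    qed
  next
    show "{} \<notin> ins a P B" using ne by (auto simp: ins_def)
  qed
  moreover have "card (ins a P B) = k" unfolding ins_def using card_image[OF inj] p(2) by simp
  moreover have "sep R (ins a P B)"
    using p(3) aR unfolding sep_def ins_def by auto
  ultimately show "ins a P B \<in> QQ R (insert a A) k" by (simp add: QQ_def)
  show "{a} \<notin> ins a P B" using ne aX B unfolding ins_def by auto
qed

lemma ins_inv:
  assumes aA: "a \<notin> A" and P: "partition_on A P" and B: "B \<in> P"
  shows "(\<lambda>X. X - {a}) ` ins a P B = P"
proof -
  have aX: "\<And>X. X \<in> P \<Longrightarrow> a \<notin> X" using part_facts(1)[OF P] aA by blast
  have "(\<lambda>X. X - {a}) ` ins a P B = (\<lambda>X. X) ` P"
    unfolding ins_def image_image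
    by (rule image_cong) (use aX in auto)
  thus ?thesis by simp
qed

lemma S2:
  assumes fin: "finite A" and aA: "a \<notin> A" and aR: "a \<notin> R"
  shows "{P \<in> QQ R (insert a A) k. {a} \<notin> P} = (\<lambda>(P,B). ins a P B) ` (SIGMA P:QQ R A k. P)"
proof (intro equalityI subsetI)
  fix P' assume "P' \<in> {P \<in> QQ R (insert a A) k. {a} \<notin> P}"
  hence p: "partition_on (insert a A) P'" "card P' = k" "sep R P'" "{a} \<notin> P'"
    by (auto simp: QQ_def)
  have sub: "\<And>X. X \<in> P' \<Longrightarrow> X \<subseteq> insert a A" and ne: "\<And>X. X \<in> P' \<Longrightarrow> X \<noteq> {}"
    using part_facts[OF p(1)] by auto
  have dj: "\<And>X Y x. X \<in> P' \<Longrightarrow> Y \<in> P' \<Longrightarrow> x \<in> X \<Longrightarrow> x \<in> Y \<Longrightarrow> X = Y"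
    using part_disj[OF p(1)] by blast
  obtain B' where B': "B' \<in> P'" "a \<in> B'" using p(1) unfolding partition_on_def by auto
  define B where "B = B' - {a}"
  define P where "P = (\<lambda>X. X - {a}) ` P'"
  have Bne: "B \<noteq> {}"
  proof
    assume "B = {}"
    hence "B' = {a}" using B'(2) unfolding B_def by blast
    thus False using B'(1) p(4) by simp
  qed
  have aX: "\<And>X. X \<in> P' \<Longrightarrow> X \<noteq> B' \<Longrightarrow> a \<notin> X" using dj B' by blast
  have inj: "inj_on (\<lambda>X. X - {a}) P'"
  proof (rule inj_onI)
    fix X Y assume XY: "X \<in> P'" "Y \<in> P'" "X - {a} = Y - {a}"
    show "X = Y"
    proof (rule ccontr)
      assume "X \<noteq> Y"
      show False
      proof (cases "X - {a} = {}")
        case True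
        hence "X = {a}" using ne XY(1) by blast
        thus False using p(4) XY(1) by simp
      next
        case False
        then obtain x where "x \<in> X" "x \<in> Y" using XY(3) by blast
        thus False using dj XY \<open>X \<noteq> Y\<close> by blast
      qed
    qed
  qed
  have "partition_on (insert a A - {a}) ((\<lambda>X. X - {a}) ` P' - {{}})"
    by (rule partition_on_transform[OF p(1)]) (auto simp: disjnt_def)
  moreover have "{} \<notin> (\<lambda>X. X - {a}) ` P'"
  proof
    assume "{} \<in> (\<lambda>X. X - {a}) ` P'"
    then obtain X where "X \<in> P'" "X - {a} = {}" by blast
    hence "X = {a}" using ne by blast
    thus False using p(4) \<open>X \<in> P'\<close> by simp
  qed
  ultimately have "partition_on A P" using aA unfolding P_def by simp
  moreover have "card P = k" unfolding P_def using card_image[OF inj] p(2) by simp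
  moreover have "sep R P" using p(3) unfolding sep_def P_def by blast
  ultimately have PQ: "P \<in> QQ R A k" by (simp add: QQ_def)
  have BP: "B \<in> P" unfolding P_def B_def using B' by blast
  have "ins a P B = (\<lambda>X. X) ` P'"
    unfolding ins_def P_def image_image
  proof (rule image_cong[OF refl])
    fix X assume X: "X \<in> P'"
    show "(if X - {a} = B then insert a (X - {a}) else X - {a}) = X"
    proof (cases "X = B'")
      case True thus ?thesis using B' by (auto simp: B_def)
    next
      case False
      hence "a \<notin> X" using aX X by blast
      moreover have "X \<noteq> B"
      proof
        assume "X = B"
        then obtain x where "x \<in> X" using Bne by blast
        hence "x \<in> B'" using \<open>X = B\<close> by (simp add: B_def)
        thus False using dj X B' \<open>x \<in> X\<close> False by blast
      qed
      ultimately show ?thesis by auto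
    qed
  qed
  hence "ins a P B = P'" by simp
  thus "P' \<in> (\<lambda>(P,B). ins a P B) ` (SIGMA P:QQ R A k. P)"
    using PQ BP by (auto intro!: image_eqI[where x="(P,B)"])
next
  fix P' assume "P' \<in> (\<lambda>(P,B). ins a P B) ` (SIGMA P:QQ R A k. P)"
  then obtain P B where "P \<in> QQ R A k" "B \<in> P" "P' = ins a P B" by auto
  thus "P' \<in> {P \<in> QQ R (insert a A) k. {a} \<notin> P}"
    using ins_part[OF assms] by auto
qed

lemma S2card:
  assumes fin: "finite A" and aA: "a \<notin> A" and aR: "a \<notin> R"
  shows "card {P \<in> QQ R (insert a A) k. {a} \<notin> P} = k * card (QQ R A k)"
proof -
  have fQ: "finite (QQ R A k)"
    by (rule finite_subset[OF _ finitely_many_partition_on[OF fin]]) (auto simp: QQ_def)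
  have fP: "\<And>P. P \<in> QQ R A k \<Longrightarrow> finite P"
    using fin finite_elements by (auto simp: QQ_def)
  have inj: "inj_on (\<lambda>(P,B). ins a P B) (SIGMA P:QQ R A k. P)"
  proof (rule inj_onI, clarify)
    fix P B P2 B2 assume h: "P \<in> QQ R A k" "B \<in> P" "P2 \<in> QQ R A k" "B2 \<in> P2"
      "ins a P B = ins a P2 B2"
    have pp: "partition_on A P" "partition_on A P2" using h by (auto simp: QQ_def)
    have "P = P2" using ins_inv[OF aA pp(1) h(2)] ins_inv[OF aA pp(2) h(4)] h(5) by simp
    have aX: "\<And>X. X \<in> P \<Longrightarrow> a \<notin> X" using part_facts(1)[OF pp(1)] aA by blast
    have "insert a B \<in> ins a P B" unfolding ins_def using h(2) by (intro image_eqI[where x=B]) auto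
    hence "insert a B \<in> ins a P2 B2" using h(5) by simp
    then obtain X where X0: "X \<in> P2" "insert a B = (if X = B2 then insert a X else X)"
      unfolding ins_def by blast
    hence X: "X \<in> P" "insert a B = (if X = B2 then insert a X else X)" using \<open>P = P2\<close> by auto
    have "X = B2" using X aX by (auto split: if_splits)
    hence "insert a B = insert a B2" using X by simp
    hence "B = B2" using aX h(2,4) \<open>P = P2\<close> by (metis insert_ident)
    thus "P = P2 \<and> B = B2" using \<open>P = P2\<close> by simp
  qed
  have "card (SIGMA P:QQ R A k. P) = (\<Sum>P\<in>QQ R A k. card P)"
    by (rule card_SigmaI) (use fQ fP in auto)
  also have "\<dots> = (\<Sum>P\<in>QQ R A k. k)" by (rule sum.cong) (auto simp: QQ_def)
  finally have "card (SIGMA P:QQ R A k. P) = k * card (QQ R A k)" by simp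
  thus ?thesis using S2[OF assms] card_image[OF inj] by simp
qed

lemma recur:
  assumes fin: "finite A" and aA: "a \<notin> A" and aR: "a \<notin> R"
  shows "card (QQ R (insert a A) (Suc k)) = Suc k * card (QQ R A (Suc k)) + card (QQ R A k)"
proof -
  have fQ: "finite (QQ R (insert a A) (Suc k))"
    by (rule finite_subset[OF _ finitely_many_partition_on[of "insert a A"]]) (auto simp: QQ_def fin)
  let ?S2 = "{P \<in> QQ R (insert a A) (Suc k). {a} \<notin> P}"
  let ?S1 = "{P \<in> QQ R (insert a A) (Suc k). {a} \<in> P}"
  have e: "QQ R (insert a A) (Suc k) = ?S2 \<union> ?S1" by blast
  have "card (?S2 \<union> ?S1) = card ?S2 + card ?S1"
    by (rule card_Un_disjoint) (use fQ in auto)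
  with e have "card (QQ R (insert a A) (Suc k)) = card ?S2 + card ?S1" by simp
  thus ?thesis using S1card[OF assms] S2card[OF assms] by simp
qed


lemma base_part:
  assumes "partition_on {1..2::nat} P" "sep {1..2} P"
  shows "P = {{1},{2}}"
proof -
  have sub: "\<And>X. X \<in> P \<Longrightarrow> X \<subseteq> {1,2}" and ne: "\<And>X. X \<in> P \<Longrightarrow> X \<noteq> {}"
  proof -
    have e12: "{1..2::nat} = {1,2}" by auto
    show "\<And>X. X \<in> P \<Longrightarrow> X \<subseteq> {1,2}" "\<And>X. X \<in> P \<Longrightarrow> X \<noteq> {}"
      using part_facts[OF assms(1)] e12 by auto
  qed
  have s12: "\<And>X. X \<in> P \<Longrightarrow> \<not> (1 \<in> X \<and> 2 \<in> X)"
  proof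
    fix X assume X: "X \<in> P" "1 \<in> X \<and> 2 \<in> X"
    have "(1::nat) \<in> {1..2}" "(2::nat) \<in> {1..2}" by auto
    hence "(1::nat) = 2" using assms(2) X unfolding sep_def by blast
    thus False by simp
  qed
  have "\<And>X. X \<in> P \<Longrightarrow> X = {1} \<or> X = {2}"
  proof -
    fix X assume X: "X \<in> P"
    have "X \<subseteq> {1,2}" "X \<noteq> {}" "\<not> (1 \<in> X \<and> 2 \<in> X)" using sub ne s12 X by auto
    thus "X = {1} \<or> X = {2}" by auto
  qed
  moreover have "{1} \<in> P"
  proof -
    have "(1::nat) \<in> \<Union>P" by (subst partition_onD1[OF assms(1), symmetric]) simp
    then obtain X where "X \<in> P" "1 \<in> X" by blast
    moreover have "X = {1} \<or> X = {2}" using calculation \<open>\<And>X. X \<in> P \<Longrightarrow> X = {1} \<or> X = {2}\<close> by blast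
    ultimately show ?thesis by auto
  qed
  moreover have "{2} \<in> P"
  proof -
    have "(2::nat) \<in> \<Union>P" by (subst partition_onD1[OF assms(1), symmetric]) simp
    then obtain X where "X \<in> P" "2 \<in> X" by blast
    moreover have "X = {1} \<or> X = {2}" using calculation \<open>\<And>X. X \<in> P \<Longrightarrow> X = {1} \<or> X = {2}\<close> by blast
    ultimately show ?thesis by auto
  qed
  ultimately show ?thesis by (intro equalityI subsetI) auto
qed

lemma base_QQ: "QQ {1..2} {1..2::nat} k = (if k = 2 then {{{1},{2}}} else {})"
proof -
  have pp: "partition_on {1..2::nat} {{1},{2}}"
    by (auto simp: partition_on_def disjoint_def)
  have ss: "sep {1..2::nat} {{1},{2}}" by (auto simp: sep_def)
  have c2: "card {{1::nat},{2}} = 2" by simp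
  have all: "\<And>P. P \<in> QQ {1..2} {1..2::nat} k \<Longrightarrow> P = {{1},{2}} \<and> k = 2"
  proof -
    fix P assume "P \<in> QQ {1..2} {1..2::nat} k"
    hence h: "partition_on {1..2::nat} P" "card P = k" "sep {1..2} P" by (simp_all add: QQ_def)
    hence "P = {{1},{2}}" using base_part by blast
    thus "P = {{1},{2}} \<and> k = 2" using h(2) c2 by simp
  qed
  show ?thesis
  proof (cases "k = 2")
    case True
    have "{{1},{2}} \<in> QQ {1..2} {1..2::nat} k" using pp ss c2 True by (simp add: QQ_def)
    hence "QQ {1..2} {1..2::nat} k = {{{1},{2}}}" using all by blast
    thus ?thesis using True by simp
  next
    case False
    hence "QQ {1..2} {1..2::nat} k = {}" using all by blast
    thus ?thesis using False by simp
  qed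
qed

definition t :: "nat \<Rightarrow> nat \<Rightarrow> nat" where "t n k = r_stirling 2 (n+2) k"

lemma t_QQ: "t n k = card (QQ {1..2} {1..n+2} k)"
  by (simp add: t_def r_stirling_def QQ_def sep_def)

lemma t0: "t 0 k = (if k = 2 then 1 else 0)"
proof -
  have "t 0 k = card (QQ {1..2} {1..2::nat} k)" by (simp only: t_QQ add_0)
  also have "\<dots> = card (if k = 2 then {{{1::nat},{2}}} else {})" by (simp only: base_QQ)
  finally show ?thesis by simp
qed

lemma t_rec: "t (Suc n) (Suc k) = Suc k * t n (Suc k) + t n k"
proof -
  have e: "{1..Suc n + 2} = insert (n+3) {1..n+2}" by auto
  show ?thesis unfolding t_QQ e by (rule recur) auto
qed

lemma t_zero: "t n 0 = 0"
proof -
  have "QQ {1..2} {1..n+2} 0 = {}"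
  proof (rule ccontr)
    assume "QQ {1..2} {1..n+2} 0 \<noteq> {}"
    then obtain P where "partition_on {1..n+2} P" "card P = 0" by (auto simp: QQ_def)
    moreover hence "finite P" using finite_elements by blast
    ultimately have "P = {}" "\<Union>P = {1..n+2}" by (auto simp: partition_on_def)
    thus False by auto
  qed
  thus ?thesis unfolding t_QQ by simp
qed

lemma t_one: "t n 1 = 0"
  by (induction n) (simp_all add: t0 t_rec[where k=0, simplified] t_zero)

lemma t_big: "k > n + 2 \<Longrightarrow> t n k = 0"
proof (induction n arbitrary: k)
  case 0 thus ?case by (simp add: t0)
next
  case (Suc n)
  then obtain k' where "k = Suc k'" by (cases k) auto
  thus ?case using Suc by (simp add: t_rec)
qed


fun step :: "nat list \<Rightarrow> nat list" where
  "step [x0,x1,x2,x3,x4,x5] = [2*x0 mod 64, 3*(x1+x0) mod 64, 4*(x2+x1) mod 64,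
      5*(x3+x2) mod 64, 6*(x4+x3) mod 64, 7*(x5+x4) mod 64]"
| "step xs = xs"

fun cv :: "nat \<Rightarrow> nat list" where
  "cv 0 = [2,0,0,0,0,0]"
| "cv (Suc n) = step (cv n)"

definition f :: "nat \<Rightarrow> nat \<Rightarrow> nat" where "f n j = fact (j+2) * t n (j+2) mod 64"

lemma aux_ring: "((c::nat) * d) * (c * x + y) = c * ((c * d) * x + d * y)"
  by (simp add: algebra_simps)

lemma aux_mod: "((c::nat) * (a + b)) mod m = (c * (a mod m + b mod m)) mod m"
  by (metis mod_add_eq mod_mult_right_eq)

lemma f_rec2: "f (Suc n) (Suc j) = ((j+3) * (f n (Suc j) + f n j)) mod 64"
proof -
  have e: "j + 3 = Suc (j+2)" by simp
  have e2: "Suc j + 2 = j + 3" by simp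
  have tr: "t (Suc n) (j+3) = (j+3) * t n (j+3) + t n (j+2)"
    unfolding e by (rule t_rec)
  have fa: "(fact (j+3) :: nat) = (j+3) * fact (j+2)"
    unfolding e by simp
  have "f (Suc n) (Suc j) = (fact (j+3) * t (Suc n) (j+3)) mod 64"
    unfolding f_def e2 by (rule refl)
  also have "fact (j+3) * t (Suc n) (j+3) = (j+3) * (fact (j+3) * t n (j+3) + fact (j+2) * t n (j+2))"
    unfolding tr fa by (rule aux_ring)
  also have "((j+3) * (fact (j+3) * t n (j+3) + fact (j+2) * t n (j+2))) mod 64
     = ((j+3) * (f n (Suc j) + f n j)) mod 64"
    unfolding f_def e2 by (rule aux_mod)
  finally show ?thesis .
qed

lemma f_rec0: "f (Suc n) 0 = (2 * f n 0) mod 64"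
proof -
  have tr: "t (Suc n) 2 = 2 * t n 2"
    using t_rec[of n 1] t_one by (simp add: numeral_2_eq_2)
  have "f (Suc n) 0 = (fact 2 * t (Suc n) 2) mod 64" unfolding f_def by (simp only: add_0)
  also have "\<dots> = (2 * (fact 2 * t n 2)) mod 64" unfolding tr by (simp only: mult.left_commute)
  also have "\<dots> = (2 * f n 0) mod 64" unfolding f_def by (simp only: add_0 mod_mult_right_eq)
  finally show ?thesis .
qed

lemma cv_eq: "cv n = [f n 0, f n 1, f n 2, f n 3, f n 4, f n 5]"
proof (induction n)
  case 0 thus ?case by (simp add: f_def t0)
next
  case (Suc n)
  have r1: "f (Suc n) 1 = 3 * (f n 1 + f n 0) mod 64" using f_rec2[of n 0] by simp
  have r2: "f (Suc n) 2 = 4 * (f n 2 + f n 1) mod 64" using f_rec2[of n 1] by (simp add: numeral_2_eq_2)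
  have r3: "f (Suc n) 3 = 5 * (f n 3 + f n 2) mod 64" using f_rec2[of n 2] by simp
  have r4: "f (Suc n) 4 = 6 * (f n 4 + f n 3) mod 64" using f_rec2[of n 3] by simp
  have r5: "f (Suc n) 5 = 7 * (f n 5 + f n 4) mod 64" using f_rec2[of n 4] by simp
  show ?case using Suc by (simp only: cv.simps step.simps f_rec0 r1 r2 r3 r4 r5)
qed

lemma sum6: "(\<Sum>k<(6::nat). g k) = g 0 + g 1 + g 2 + g 3 + g 4 + (g 5 :: nat)"
  by (simp add: lessThan_nat_numeral algebra_simps)

lemma fub_mod: "r_fubini n 2 mod 64 = sum_list (cv n) mod 64"
proof -
  define h where "h k = fact (k+2) * t n (k+2)" for k
  have "r_fubini n 2 = (\<Sum>k=0..n. h k)" by (simp add: r_fubini_def h_def t_def)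
  also have "\<dots> = (\<Sum>k<n+6. h k)"
    by (rule sum.mono_neutral_left) (auto simp: h_def t_big)
  also have "\<dots> = (\<Sum>k<6. h k) + (\<Sum>k=6..<n+6. h k)"
    by (metis add.commute le_add2 sum.atLeastLessThan_concat lessThan_atLeast0 zero_le)
  finally have e: "r_fubini n 2 = (\<Sum>k<6. h k) + (\<Sum>k=6..<n+6. h k)" .
  have "(64::nat) dvd (\<Sum>k=6..<n+6. h k)"
  proof (rule dvd_sum)
    fix k assume "k \<in> {6..<n+6}"
    hence "(fact 8 :: nat) dvd fact (k+2)" by (intro fact_dvd) auto
    moreover have "(64::nat) dvd fact 8" by (simp add: fact_numeral)
    ultimately show "64 dvd h k" unfolding h_def by (meson dvd_mult2 dvd_trans)
  qed
  hence "r_fubini n 2 mod 64 = (\<Sum>k<6. h k) mod 64" unfolding e by (auto elim!: dvdE)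
  also have "\<dots> = (\<Sum>k<6. h k mod 64) mod 64" by (simp add: mod_sum_eq)
  also have "(\<Sum>k<6. h k mod 64) = (\<Sum>k<6. f n k)"
    by (rule sum.cong) (simp_all add: h_def f_def)
  also have "\<dots> = sum_list (cv n)"
    unfolding cv_eq sum6 by (simp add: algebra_simps)
  finally show ?thesis .
qed

lemma cvS: "cv (numeral k) = step (cv (pred_numeral k))"
  by (simp add: numeral_eq_Suc)

lemma cv_per: "5 \<le> n \<Longrightarrow> cv (n+8) = cv n"
proof (induction n rule: dec_induct)
  case base show ?case by (simp add: cvS)
next
  case (step n)
  hence "cv (n+8) = cv n" by blast
  thus ?case by (metis add_Suc cv.simps(2))
qed

definition H where "H n = sum_list (cv n) mod 64"

lemma H_small: "5 \<le> n \<Longrightarrow> n \<le> 12 \<Longrightarrow> H (n+2) = H n"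
proof -
  assume "5 \<le> n" "n \<le> 12"
  hence "n = 5 \<or> n = 6 \<or> n = 7 \<or> n = 8 \<or> n = 9 \<or> n = 10 \<or> n = 11 \<or> n = 12" by auto
  thus ?thesis by (elim disjE) (simp_all add: H_def cvS)
qed

lemma H_per: "5 \<le> n \<Longrightarrow> H (n+2) = H n"
proof (induction n rule: less_induct)
  case (less n)
  show ?case
  proof (cases "n \<le> 12")
    case True thus ?thesis using H_small less.prems by auto
  next
    case False
    have a: "cv (n+2) = cv (n-8+2)" using cv_per[of "n-8+2"] False by simp
    have b: "cv n = cv (n-8)" using cv_per[of "n-8"] False by simp
    have "H (n-8+2) = H (n-8)" using less.IH[of "n-8"] False by simp
    thus ?thesis unfolding H_def a b .
  qed
qed

theorem theorem4p1:
  fixes m n :: nat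
  assumes "3 \<le> m" and "m \<le> 6" and "m - 1 \<le> n"
  shows "r_fubini (n + 2) 2 mod 2 ^ m = r_fubini n 2 mod 2 ^ m"
proof -
  have d: "(2::nat) ^ m dvd 64"
  proof -
    have "(2::nat) ^ m dvd 2 ^ 6" using assms(2) by (rule le_imp_power_dvd)
    thus ?thesis by simp
  qed
  have red: "x mod 2 ^ m = (x mod 64) mod 2 ^ m" for x :: nat
    using d by (simp add: mod_mod_cancel)
  have "r_fubini (n + 2) 2 mod 2 ^ m = H (n+2) mod 2 ^ m"
    using red[of "r_fubini (n+2) 2"] by (simp add: fub_mod H_def)
  moreover have "r_fubini n 2 mod 2 ^ m = H n mod 2 ^ m"
    using red[of "r_fubini n 2"] by (simp add: fub_mod H_def)
  moreover have "H (n+2) mod 2 ^ m = H n mod 2 ^ m"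
  proof (cases "5 \<le> n")
    case True thus ?thesis using H_per by simp
  next
    case False
    hence n4: "n \<le> 4" by simp
    have n2: "2 \<le> n" using assms by simp
    have "n = 2 \<or> n = 3 \<or> n = 4" using n4 n2 by auto
    moreover have "m = 3 \<or> m = 4 \<or> m = 5 \<or> m = 6" using assms(1,2) by auto
    ultimately show ?thesis using assms(3)
      by (elim disjE) (simp_all add: H_def cvS)
  qed
  ultimately show ?thesis by simp
qed

end
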